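(* Let $s\geq 3$, let $p,q$ be coprime integers with $q>0$ and $p-(4s+7)q\geq 0$, and let $k\in G_{K_s}(p,q)$ satisfy $M=k^q$, $L=k^{-p}$. Let $P$ be a partially ordered set on which $G_{K_s}(p,q)$ acts (on the right) by order-preserving bijections. Suppose $x\in P$ satisfies one of: (1) $xk=x$, and $x$ and $xl$ are comparable in $P$; or (2) $xl=x$, and $x$ and $xk$ are comparable in $P$. Then $xg=x$ for every $g\in G_{K_s}(p,q)$.
   Context: Let $R=c\,l\,c\,l^{-1}c^{-1}l^{-s}c^{-1}l^{-1}c\,l\,c\,l^{s-1}$, $M=c$ and $L=c^{-(2s-2)}\,l\,c\,l^{s}\,c\,l^{s}\,c\,l\,c^{-(2s+9)}$, and $G_{K_s}(p,q)=\langle c,l\mid R,\ M^pL^q\rangle$. For an action we write $xg$ for the image of $x$ under $g$, and $xg_1g_2=(xg_1)g_2$. Two elements $x,y$ of $P$ are comparable if $x<y$, $x=y$ or $x>y$. *)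

theory Defs
  imports "HOL-Algebra.Group" "HOL-Computational_Algebra.Primes"
begin

text \<open>A letter is (generator, inverted?): generator True = c, False = l.\<close>
type_synonym letter = "bool \<times> bool"

definition inv_letter :: "letter \<Rightarrow> letter" where
  "inv_letter a = (fst a, \<not> snd a)"

definition inv_word :: "letter list \<Rightarrow> letter list" where
  "inv_word w = rev (map inv_letter w)"

definition pow_word :: "letter list \<Rightarrow> int \<Rightarrow> letter list" where
  "pow_word w n = (if 0 \<le> n then concat (replicate (nat n) w)
                   else concat (replicate (nat (- n)) (inv_word w)))"

definition wc :: "letter list" where "wc = [(True, False)]"
definition wl :: "letter list" where "wl = [(False, False)]"

definition R_word :: "int \<Rightarrow> letter list" where
  "R_word s = wc @ wl @ wc @ inv_word wl @ inv_word wc @ pow_word wl (- s) @ inv_word wc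
     @ inv_word wl @ wc @ wl @ wc @ pow_word wl (s - 1)"

definition M_word :: "letter list" where "M_word = wc"

definition L_word :: "int \<Rightarrow> letter list" where
  "L_word s = pow_word wc (- (2 * s - 2)) @ wl @ wc @ pow_word wl s @ wc @ pow_word wl s
     @ wc @ wl @ pow_word wc (- (2 * s + 9))"

definition relators :: "int \<Rightarrow> int \<Rightarrow> int \<Rightarrow> letter list set" where
  "relators s p q = {R_word s, pow_word M_word p @ pow_word (L_word s) q}"

inductive word_eqv :: "letter list set \<Rightarrow> letter list \<Rightarrow> letter list \<Rightarrow> bool"
  for rels where
  refl: "word_eqv rels w w"
| sym: "word_eqv rels u v \<Longrightarrow> word_eqv rels v u"
| trans: "word_eqv rels u v \<Longrightarrow> word_eqv rels v w \<Longrightarrow> word_eqv rels u w"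
| cancel: "word_eqv rels (u @ [a, inv_letter a] @ v) (u @ v)"
| relator: "r \<in> rels \<Longrightarrow> word_eqv rels (u @ r @ v) (u @ v)"

definition presented_group :: "letter list set \<Rightarrow> letter list set monoid" where
  "presented_group rels =
     \<lparr> carrier = UNIV // {(u, v). word_eqv rels u v},
       monoid.mult = (\<lambda>A B. {w. \<exists>u\<in>A. \<exists>v\<in>B. word_eqv rels (u @ v) w}),
       monoid.one = {w. word_eqv rels [] w} \<rparr>"

definition word_class :: "letter list set \<Rightarrow> letter list \<Rightarrow> letter list set" where
  "word_class rels w = {v. word_eqv rels w v}"

definition GK :: "int \<Rightarrow> int \<Rightarrow> int \<Rightarrow> letter list set monoid" where
  "GK s p q = presented_group (relators s p q)"

definition gen_c :: "int \<Rightarrow> int \<Rightarrow> int \<Rightarrow> letter list set" where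
  "gen_c s p q = word_class (relators s p q) wc"
definition gen_l :: "int \<Rightarrow> int \<Rightarrow> int \<Rightarrow> letter list set" where
  "gen_l s p q = word_class (relators s p q) wl"
definition elt_M :: "int \<Rightarrow> int \<Rightarrow> int \<Rightarrow> letter list set" where
  "elt_M s p q = word_class (relators s p q) M_word"
definition elt_L :: "int \<Rightarrow> int \<Rightarrow> int \<Rightarrow> letter list set" where
  "elt_L s p q = word_class (relators s p q) (L_word s)"

text \<open>act g x is the image xg; right action: x(gh) = (xg)h.\<close>
definition right_order_action :: "('g, 'm) monoid_scheme \<Rightarrow> ('g \<Rightarrow> 'p::order \<Rightarrow> 'p) \<Rightarrow> bool" where
  "right_order_action G act \<longleftrightarrow>
     (\<forall>g\<in>carrier G. bij (act g) \<and> mono (act g)) \<and>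
     act \<one>\<^bsub>G\<^esub> = id \<and>
     (\<forall>g\<in>carrier G. \<forall>h\<in>carrier G. \<forall>x. act (g \<otimes>\<^bsub>G\<^esub> h) x = act h (act g x))"

definition comparable :: "'p::order \<Rightarrow> 'p \<Rightarrow> bool" where
  "comparable x y \<longleftrightarrow> x < y \<or> x = y \<or> y < x"

end

theory Submission
  imports Defs
begin


lemma eqv_cong: "word_eqv rels u v \<Longrightarrow> word_eqv rels (a @ u @ b) (a @ v @ b)"
proof (induction rule: word_eqv.induct)
  case (refl w) then show ?case by (rule word_eqv.refl)
next
  case (sym u v) then show ?case by (metis word_eqv.sym)
next
  case (trans u v w) then show ?case by (metis word_eqv.trans)
next
  case (cancel u x v)
  have "word_eqv rels ((a @ u) @ [x, inv_letter x] @ (v @ b)) ((a @ u) @ (v @ b))"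
    by (rule word_eqv.cancel)
  then show ?case by simp
next
  case (relator r u v)
  have "word_eqv rels ((a @ u) @ r @ (v @ b)) ((a @ u) @ (v @ b))"
    by (rule word_eqv.relator[OF relator])
  then show ?case by simp
qed

lemma eqv_cong2: "word_eqv rels u u' \<Longrightarrow> word_eqv rels v v' \<Longrightarrow> word_eqv rels (u @ v) (u' @ v')"
  using eqv_cong[of rels u u' "[]" v] eqv_cong[of rels v v' u' "[]"]
  by (auto intro: word_eqv.trans)

lemma class_eq_iff: "word_class rels u = word_class rels v \<longleftrightarrow> word_eqv rels u v"
  unfolding word_class_def
  by (auto intro: word_eqv.refl word_eqv.sym word_eqv.trans)

lemma carrier_pg: "A \<in> carrier (presented_group rels) \<longleftrightarrow> (\<exists>w. A = word_class rels w)"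
  unfolding presented_group_def word_class_def quotient_def by auto

lemma one_pg: "\<one>\<^bsub>presented_group rels\<^esub> = word_class rels []"
  unfolding presented_group_def word_class_def by simp

lemma mult_pg: "word_class rels u \<otimes>\<^bsub>presented_group rels\<^esub> word_class rels v = word_class rels (u @ v)"
  unfolding presented_group_def word_class_def
  by (auto intro: word_eqv.refl word_eqv.sym word_eqv.trans eqv_cong2)

lemma inv_letter_inv[simp]: "inv_letter (inv_letter a) = a"
  by (simp add: inv_letter_def)

lemma inv_word_cancel: "word_eqv rels (inv_word w @ w) []"
proof (induction w)
  case Nil then show ?case by (simp add: inv_word_def word_eqv.refl)
next
  case (Cons a w)
  have "inv_word (a # w) @ a # w = inv_word w @ [inv_letter a, inv_letter (inv_letter a)] @ w"
    by (simp add: inv_word_def)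
  moreover have "word_eqv rels (inv_word w @ [inv_letter a, inv_letter (inv_letter a)] @ w) (inv_word w @ w)"
    by (rule word_eqv.cancel)
  ultimately show ?case using Cons by (metis word_eqv.trans)
qed

lemma group_pg: "group (presented_group rels)"
proof (rule groupI)
  fix x y assume "x \<in> carrier (presented_group rels)" "y \<in> carrier (presented_group rels)"
  then show "x \<otimes>\<^bsub>presented_group rels\<^esub> y \<in> carrier (presented_group rels)"
    by (auto simp: carrier_pg mult_pg)
next
  show "\<one>\<^bsub>presented_group rels\<^esub> \<in> carrier (presented_group rels)"
    by (auto simp: carrier_pg one_pg)
next
  fix x y z assume "x \<in> carrier (presented_group rels)" "y \<in> carrier (presented_group rels)"
    "z \<in> carrier (presented_group rels)"
  then show "x \<otimes>\<^bsub>presented_group rels\<^esub> y \<otimes>\<^bsub>presented_group rels\<^esub> z =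
     x \<otimes>\<^bsub>presented_group rels\<^esub> (y \<otimes>\<^bsub>presented_group rels\<^esub> z)"
    by (auto simp: carrier_pg mult_pg)
next
  fix x assume "x \<in> carrier (presented_group rels)"
  then show "\<one>\<^bsub>presented_group rels\<^esub> \<otimes>\<^bsub>presented_group rels\<^esub> x = x"
    by (auto simp: carrier_pg mult_pg one_pg)
next
  fix x assume "x \<in> carrier (presented_group rels)"
  then obtain w where w: "x = word_class rels w" by (auto simp: carrier_pg)
  show "\<exists>y\<in>carrier (presented_group rels). y \<otimes>\<^bsub>presented_group rels\<^esub> x = \<one>\<^bsub>presented_group rels\<^esub>"
  proof (rule bexI[of _ "word_class rels (inv_word w)"])
    show "word_class rels (inv_word w) \<in> carrier (presented_group rels)"
      unfolding carrier_pg by blast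
    show "word_class rels (inv_word w) \<otimes>\<^bsub>presented_group rels\<^esub> x = \<one>\<^bsub>presented_group rels\<^esub>"
      unfolding w mult_pg one_pg class_eq_iff by (rule inv_word_cancel)
  qed
qed

lemma inv_pg: "inv\<^bsub>presented_group rels\<^esub> (word_class rels w) = word_class rels (inv_word w)"
proof -
  interpret group "presented_group rels" by (rule group_pg)
  have "word_class rels (inv_word w) \<otimes>\<^bsub>presented_group rels\<^esub> word_class rels w = \<one>\<^bsub>presented_group rels\<^esub>"
    by (auto simp: mult_pg one_pg class_eq_iff inv_word_cancel)
  moreover have "word_class rels w \<in> carrier (presented_group rels)" "word_class rels (inv_word w) \<in> carrier (presented_group rels)"
    unfolding carrier_pg by blast+
  ultimately show ?thesis
    by (rule inv_equality)
qed

lemma pow_pg: "word_class rels (pow_word w n) = word_class rels w [^]\<^bsub>presented_group rels\<^esub> n"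
proof -
  interpret group "presented_group rels" by (rule group_pg)
  have nat: "word_class rels (concat (replicate m v)) = word_class rels v [^]\<^bsub>presented_group rels\<^esub> m" for v m
  proof (induction m)
    case 0 then show ?case by (simp add: one_pg)
  next
    case (Suc m)
    have "word_class rels v [^]\<^bsub>presented_group rels\<^esub> Suc m = word_class rels v \<otimes>\<^bsub>presented_group rels\<^esub> word_class rels v [^]\<^bsub>presented_group rels\<^esub> m"
      by (rule nat_pow_Suc2) (auto simp: carrier_pg)
    moreover have "word_class rels (concat (replicate (Suc m) v)) = word_class rels v \<otimes>\<^bsub>presented_group rels\<^esub> word_class rels (concat (replicate m v))"
      by (simp only: replicate_Suc concat.simps mult_pg)
    ultimately show ?case using Suc.IH by metis
  qed
  show ?thesis
  proof (cases "0 \<le> n")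
    case True
    then have "word_class rels (pow_word w n) = word_class rels w [^]\<^bsub>presented_group rels\<^esub> (nat n)"
      by (simp only: pow_word_def if_True nat)
    then show ?thesis using True by (simp add: pow_nat)
  next
    case False
    have c: "word_class rels w \<in> carrier (presented_group rels)" unfolding carrier_pg by blast
    have "word_class rels (pow_word w n) = word_class rels (concat (replicate (nat (-n)) (inv_word w)))"
      using False by (simp add: pow_word_def)
    also have "\<dots> = (inv\<^bsub>presented_group rels\<^esub> (word_class rels w)) [^]\<^bsub>presented_group rels\<^esub> (nat (-n))"
      by (simp only: nat inv_pg)
    also have "\<dots> = inv\<^bsub>presented_group rels\<^esub> (word_class rels w [^]\<^bsub>presented_group rels\<^esub> (nat (-n)))"
      by (rule nat_pow_inv[OF c])
    also have "\<dots> = word_class rels w [^]\<^bsub>presented_group rels\<^esub> n"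
    proof -
      have "word_class rels w [^]\<^bsub>presented_group rels\<^esub> n = inv\<^bsub>presented_group rels\<^esub> (word_class rels w [^]\<^bsub>presented_group rels\<^esub> (-n))"
        using int_pow_neg[OF c, of "-n"] by simp
      moreover have "word_class rels w [^]\<^bsub>presented_group rels\<^esub> (-n) = word_class rels w [^]\<^bsub>presented_group rels\<^esub> (nat (-n))"
        using pow_nat[of "-n"] False by simp
      ultimately show ?thesis by simp
    qed
    finally show ?thesis .
  qed
qed



lemma pow_closed:
  assumes grp: "group G"
    and mult: "\<And>g h y. g\<in>carrier G \<Longrightarrow> h\<in>carrier G \<Longrightarrow> act (g \<otimes>\<^bsub>G\<^esub> h) y = act h (act g y)"
    and one: "act \<one>\<^bsub>G\<^esub> = id"
    and g: "g \<in> carrier G"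
    and cl: "\<forall>y. lt x y \<longrightarrow> lt x (act g y)"
  shows "lt x y \<Longrightarrow> lt x (act (g [^]\<^bsub>G\<^esub> (n::nat)) y)"
proof (induction n arbitrary: y)
  case 0
  then show ?case using one by simp
next
  case (Suc n)
  interpret group G by (rule grp)
  have "act (g [^]\<^bsub>G\<^esub> Suc n) y = act g (act (g [^]\<^bsub>G\<^esub> n) y)"
    using mult g by (simp add: nat_pow_Suc)
  then show ?case using Suc cl by simp
qed

lemma chain:
  assumes grp: "group G"
    and mult: "\<And>g h y. g\<in>carrier G \<Longrightarrow> h\<in>carrier G \<Longrightarrow> act (g \<otimes>\<^bsub>G\<^esub> h) y = act h (act g y)"
    and one: "act \<one>\<^bsub>G\<^esub> = id"
    and cl: "c \<in> carrier G" "l \<in> carrier G"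
    and Sc: "\<forall>y. lt x y \<longrightarrow> lt x (act c y)"
    and Sl: "\<forall>y. lt x y \<longrightarrow> lt x (act l y)"
    and start: "lt x (act l x) \<or> (act l x = x \<and> lt x (act c x))"
  shows "lt x (act (l \<otimes>\<^bsub>G\<^esub> (c \<otimes>\<^bsub>G\<^esub> (l [^]\<^bsub>G\<^esub> (n::nat) \<otimes>\<^bsub>G\<^esub> (c \<otimes>\<^bsub>G\<^esub> (l [^]\<^bsub>G\<^esub> n \<otimes>\<^bsub>G\<^esub> (c \<otimes>\<^bsub>G\<^esub> l)))))) x)"
proof -
  interpret group G by (rule grp)
  have Sln: "\<And>y. lt x y \<Longrightarrow> lt x (act (l [^]\<^bsub>G\<^esub> n) y)"
    using pow_closed[of G act l lt x, OF grp mult one cl(2) Sl] by blast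
  have e: "act (l \<otimes>\<^bsub>G\<^esub> (c \<otimes>\<^bsub>G\<^esub> (l [^]\<^bsub>G\<^esub> (n::nat) \<otimes>\<^bsub>G\<^esub> (c \<otimes>\<^bsub>G\<^esub> (l [^]\<^bsub>G\<^esub> n \<otimes>\<^bsub>G\<^esub> (c \<otimes>\<^bsub>G\<^esub> l)))))) x
     = act l (act c (act (l [^]\<^bsub>G\<^esub> n) (act c (act (l [^]\<^bsub>G\<^esub> n) (act c (act l x))))))"
    using cl by (simp add: mult)
  have "lt x (act c (act l x))"
    using start Sc by auto
  then show ?thesis unfolding e using Sc Sl Sln by blast
qed

lemma strict:
  assumes "right_order_action G act" "g \<in> carrier G" "(y::'p::order) < z"
  shows "act g y < act g z"
proof -
  have "bij (act g)" "mono (act g)" using assms unfolding right_order_action_def by auto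
  then have le: "act g y \<le> act g z" and inj: "inj (act g)" using assms(3)
    by (auto simp: monoD bij_is_inj)
  have "act g y \<noteq> act g z"
  proof
    assume "act g y = act g z"
    then have "y = z" using inj by (simp add: inj_eq)
    then show False using assms(3) by simp
  qed
  then show ?thesis using le by simp
qed

lemma W_pow:
  fixes G (structure)
  assumes grp: "group G" and k: "k \<in> carrier G" and W: "W \<in> carrier G"
    and L: "k [^]\<^bsub>G\<^esub> (-p) = c [^]\<^bsub>G\<^esub> (-a) \<otimes>\<^bsub>G\<^esub> (W \<otimes>\<^bsub>G\<^esub> c [^]\<^bsub>G\<^esub> (-b))"
    and c: "c = k [^]\<^bsub>G\<^esub> (q::int)"
  shows "W = k [^]\<^bsub>G\<^esub> (q*a - p + q*b)"
proof -
  interpret group G by (rule grp)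
  have ca: "c [^] (-a) = k [^] (- (q*a))" "c [^] (-b) = k [^] (- (q*b))"
    using c int_pow_pow[OF k] by auto
  have "k [^] (q*a) \<otimes> k [^] (-p) \<otimes> k [^] (q*b) = k [^] (q*a) \<otimes> (k [^] (- (q*a)) \<otimes> (W \<otimes> k [^] (- (q*b)))) \<otimes> k [^] (q*b)"
    using L ca by simp
  also have "\<dots> = (k [^] (q*a) \<otimes> k [^] (- (q*a))) \<otimes> W \<otimes> (k [^] (- (q*b)) \<otimes> k [^] (q*b))"
    using k W by (simp add: m_assoc)
  also have "\<dots> = W"
    using k W by (simp add: int_pow_mult[symmetric])
  finally have "W = k [^] (q*a) \<otimes> k [^] (-p) \<otimes> k [^] (q*b)" by simp
  also have "\<dots> = k [^] (q*a - p + q*b)"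
    using k by (simp add: int_pow_mult[symmetric])
  finally show ?thesis .
qed



lemma case1_core:
  fixes G (structure)
  assumes grp: "group G"
    and mult: "\<And>g h y. g\<in>carrier G \<Longrightarrow> h\<in>carrier G \<Longrightarrow> act (g \<otimes> h) y = act h (act g y)"
    and one: "act \<one> = id"
    and cl: "c \<in> carrier G" "l \<in> carrier G"
    and pres: "\<And>g y z. g \<in> carrier G \<Longrightarrow> lt y z \<Longrightarrow> lt (act g y) (act g z)"
    and tr: "\<And>a b d. lt a b \<Longrightarrow> lt b d \<Longrightarrow> lt a d"
    and irr: "\<not> lt x x"
    and fc: "act c x = x"
    and fW: "act (l \<otimes> (c \<otimes> (l [^] (n::nat) \<otimes> (c \<otimes> (l [^] n \<otimes> (c \<otimes> l)))))) x = x"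
    and st: "lt x (act l x)"
  shows False
proof -
  have Sc: "\<forall>y. lt x y \<longrightarrow> lt x (act c y)"
    using pres[OF cl(1)] fc by metis
  have Sl: "\<forall>y. lt x y \<longrightarrow> lt x (act l y)"
    using pres[OF cl(2)] st tr by metis
  have "lt x (act (l \<otimes> (c \<otimes> (l [^] (n::nat) \<otimes> (c \<otimes> (l [^] n \<otimes> (c \<otimes> l)))))) x)"
    apply (rule chain[of G act c l lt x])
    using grp mult one cl Sc Sl st by auto
  then show False using fW irr by simp
qed

lemma case2_core:
  fixes G (structure)
  assumes grp: "group G"
    and mult: "\<And>g h y. g\<in>carrier G \<Longrightarrow> h\<in>carrier G \<Longrightarrow> act (g \<otimes> h) y = act h (act g y)"
    and one: "act \<one> = id"
    and cl: "k \<in> carrier G" "l \<in> carrier G"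
    and pres: "\<And>g y z. g \<in> carrier G \<Longrightarrow> lt y z \<Longrightarrow> lt (act g y) (act g z)"
    and tr: "\<And>a b d. lt a b \<Longrightarrow> lt b d \<Longrightarrow> lt a d"
    and irr: "\<not> lt x x"
    and c: "c = k [^] Suc N"
    and fl: "act l x = x"
    and fW: "act (k [^] (M::nat)) (act (l \<otimes> (c \<otimes> (l [^] (n::nat) \<otimes> (c \<otimes> (l [^] n \<otimes> (c \<otimes> l)))))) x) = x"
    and st: "lt x (act k x)"
  shows False
proof -
  interpret group G by (rule grp)
  have cc: "c \<in> carrier G" using c cl by simp
  have Sk: "\<forall>y. lt x y \<longrightarrow> lt x (act k y)"
    using pres[OF cl(1)] st tr by metis
  have Skn: "\<And>y m. lt x y \<Longrightarrow> lt x (act (k [^] (m::nat)) y)"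
    using pow_closed[of G act k lt x, OF grp mult one cl(1) Sk] by blast
  have Sc: "\<forall>y. lt x y \<longrightarrow> lt x (act c y)"
    using Skn c by blast
  have Sl: "\<forall>y. lt x y \<longrightarrow> lt x (act l y)"
    using pres[OF cl(2)] fl by metis
  have "k [^] Suc N = k \<otimes> k [^] N" by (rule nat_pow_Suc2[OF cl(1)])
  then have "act c x = act (k [^] N) (act k x)"
    using c cl by (simp add: mult)
  then have "lt x (act c x)" using Skn st by simp
  have "lt x (act (l \<otimes> (c \<otimes> (l [^] (n::nat) \<otimes> (c \<otimes> (l [^] n \<otimes> (c \<otimes> l)))))) x)"
    apply (rule chain[of G act c l lt x])
    using grp mult one cc cl Sc Sl fl \<open>lt x (act c x)\<close> by auto
  then have "lt x (act (k [^] (M::nat)) (act (l \<otimes> (c \<otimes> (l [^] (n::nat) \<otimes> (c \<otimes> (l [^] n \<otimes> (c \<otimes> l)))))) x))"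
    by (rule Skn)
  then show False using fW irr by simp
qed

lemma fix_pow:
  fixes G (structure)
  assumes grp: "group G"
    and mult: "\<And>g h y. g\<in>carrier G \<Longrightarrow> h\<in>carrier G \<Longrightarrow> act (g \<otimes> h) y = act h (act g y)"
    and one: "act \<one> = id"
    and k: "k \<in> carrier G" and fk: "act k x = x"
  shows "act (k [^] (i::int)) x = x"
proof -
  interpret group G by (rule grp)
  have nat: "act (k [^] (m::nat)) x = x" for m
    by (induction m) (use one k fk mult in \<open>simp_all add: nat_pow_Suc\<close>)
  have inv: "act (inv g) x = x" if "g \<in> carrier G" "act g x = x" for g
  proof -
    have "act (g \<otimes> inv g) x = act (inv g) (act g x)" by (rule mult) (simp_all add: that)
    then show ?thesis using that one by simp
  qed
  show ?thesis
  proof (cases "0 \<le> i")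
    case True then show ?thesis using nat[of "nat i"] by (simp add: pow_nat)
  next
    case False
    have a: "k [^] i = inv (k [^] (-i))" using int_pow_neg[OF k, of "-i"] by simp
    have b: "k [^] (-i) = k [^] (nat (-i))" using pow_nat[of "-i"] False by simp
    from a b have "k [^] i = inv (k [^] (nat (-i)))" by simp
    then show ?thesis using inv[of "k [^] (nat (-i))"] nat k by simp
  qed
qed



lemma fix_inv:
  fixes G (structure)
  assumes grp: "group G"
    and mult: "\<And>g h y. g\<in>carrier G \<Longrightarrow> h\<in>carrier G \<Longrightarrow> act (g \<otimes> h) y = act h (act g y)"
    and one: "act \<one> = id"
    and g: "g \<in> carrier G" and fg: "act g x = x"
  shows "act (inv g) x = x"
proof -
  interpret group G by (rule grp)
  have "act (g \<otimes> inv g) x = act (inv g) (act g x)" by (rule mult) (simp_all add: g)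
  then show ?thesis using g fg one by simp
qed

lemma main_aux:
  fixes G (structure)
    and act :: "letter list set \<Rightarrow> 'p::order \<Rightarrow> 'p"
    and s p q :: int
  assumes G: "G = presented_group rels"
    and k: "k \<in> carrier G"
    and hc: "k [^] q = word_class rels wc"
    and q: "q > 0"
    and hL: "k [^] (-p) = word_class rels (L_word s)"
    and s: "s \<ge> 0"
    and pm: "p - (4 * s + 7) * q \<ge> 0"
    and roa: "right_order_action G act"
    and hyp: "(act k x = x \<and> comparable x (act (word_class rels wl) x))
         \<or> (act (word_class rels wl) x = x \<and> comparable x (act k x))"
  shows "\<forall>g\<in>carrier G. act g x = x"
proof -
  have grp: "group G" using G group_pg by simp
  interpret group G by (rule grp)
  have mult: "\<And>g h y. g\<in>carrier G \<Longrightarrow> h\<in>carrier G \<Longrightarrow> act (g \<otimes> h) y = act h (act g y)"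
    using roa unfolding right_order_action_def by blast
  have one: "act \<one> = id" using roa unfolding right_order_action_def by blast
  have pres: "\<And>g y z. g \<in> carrier G \<Longrightarrow> y < z \<Longrightarrow> act g y < act g z"
    using strict[OF roa] by blast
  have presd: "\<And>g y z. g \<in> carrier G \<Longrightarrow> (\<lambda>a b. b < a) y z \<Longrightarrow> (\<lambda>a b. b < a) (act g y) (act g z)"
    using strict[OF roa] by blast
  have mG: "\<And>u v. word_class rels u \<otimes> word_class rels v = word_class rels (u @ v)"
    using mult_pg G by simp
  have cG: "\<And>u. word_class rels u \<in> carrier G" using carrier_pg G by blast
  have pG: "\<And>u n. word_class rels (pow_word u n) = word_class rels u [^] (n::int)"
    using pow_pg G by simp
  define c where "c = word_class rels wc"
  define l where "l = word_class rels wl"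
  have cc: "c \<in> carrier G" "l \<in> carrier G" using cG c_def l_def by auto
  define W where "W = l \<otimes> (c \<otimes> (l [^] (nat s) \<otimes> (c \<otimes> (l [^] (nat s) \<otimes> (c \<otimes> l)))))"
  have Wc: "W \<in> carrier G" using cc by (simp add: W_def)
  have ls: "l [^] s = l [^] (nat s)" using s by (simp add: pow_nat)
  have Lx: "word_class rels (L_word s) = c [^] (-(2*s-2)) \<otimes> (W \<otimes> c [^] (-(2*s+9)))"
    unfolding L_word_def mG[symmetric] pG
    using cc by (simp add: c_def[symmetric] l_def[symmetric] ls W_def m_assoc)
  have Wk: "W = k [^] (q*(2*s-2) - p + q*(2*s+9))"
    by (rule W_pow[OF grp k Wc]) (use hL Lx hc c_def in simp_all)
  define m where "m = p - (4 * s + 7) * q"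
  have Wm: "W \<otimes> k [^] (nat m) = \<one>"
  proof -
    have "W \<otimes> k [^] (nat m) = k [^] (-m) \<otimes> k [^] m"
    proof -
      have e: "q*(2*s-2) - p + q*(2*s+9) = -m" by (simp add: m_def algebra_simps)
      have "k [^] (nat m) = k [^] m" using pm m_def by (simp add: pow_nat)
      then show ?thesis using Wk e by simp
    qed
    also have "\<dots> = k [^] (-m + m)" by (rule int_pow_mult[OF k, symmetric])
    finally show ?thesis by simp
  qed
  have fW2: "act (k [^] (nat m)) (act W x) = x"
    using mult[of W "k [^] (nat m)" x] Wm Wc k one by simp
  have irr: "\<not> x < x" "\<not> (\<lambda>a b. b < a) x x" by simp_all
  have trd: "\<And>(a::'p) b d. (\<lambda>a b. b < a) a b \<Longrightarrow> (\<lambda>a b. b < a) b d \<Longrightarrow> (\<lambda>a b. b < a) a d"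
    by (meson order.strict_trans)
  have fixes_cl: "act c x = x \<and> act l x = x"
  proof (cases "act k x = x")
    case True
    have fc: "act c x = x" using fix_pow[OF grp mult one k True, of q] hc c_def by simp
    have fW: "act W x = x" using fix_pow[OF grp mult one k True] Wk by simp
    have fW': "act (l \<otimes> (c \<otimes> (l [^] (nat s) \<otimes> (c \<otimes> (l [^] (nat s) \<otimes> (c \<otimes> l)))))) x = x"
      using fW W_def by simp
    have cmp: "comparable x (act l x)" using hyp True l_def by auto
    have "act l x = x"
    proof (rule ccontr)
      assume ne: "act l x \<noteq> x"
      then consider "x < act l x" | "act l x < x" using cmp unfolding comparable_def by auto
      then show False
      proof cases
        case 1
        show False
          by (rule case1_core[of G act c l "(<)" x "nat s", OF grp mult one cc pres _ irr(1) fc fW' 1])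
             (auto intro: less_trans)
      next
        case 2
        show False
          by (rule case1_core[of G act c l "\<lambda>a b. b < a" x "nat s", OF grp mult one cc presd trd irr(2) fc fW'])
             (use 2 in auto)
      qed
    qed
    then show ?thesis using fc by simp
  next
    case False
    have fl: "act l x = x" and cmp: "comparable x (act k x)" using hyp False l_def by auto
    have cq: "c = k [^] Suc (nat q - 1)"
    proof -
      have "Suc (nat q - 1) = nat q" using q by simp
      then show ?thesis using hc c_def q by (simp add: pow_nat)
    qed
    have fW': "act (k [^] (nat m)) (act (l \<otimes> (c \<otimes> (l [^] (nat s) \<otimes> (c \<otimes> (l [^] (nat s) \<otimes> (c \<otimes> l)))))) x) = x"
      using fW2 W_def by simp
    consider "x < act k x" | "act k x < x" using cmp False unfolding comparable_def by auto
    then have False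
    proof cases
      case 1
      show False
        by (rule case2_core[of G act k l "(<)" x c "nat q - 1" "nat m" "nat s", OF grp mult one k cc(2) pres _ irr(1) cq fl fW' 1])
           (auto intro: less_trans)
    next
      case 2
      show False
        by (rule case2_core[of G act k l "\<lambda>a b. b < a" x c "nat q - 1" "nat m" "nat s", OF grp mult one k cc(2) presd trd irr(2) cq fl fW'])
           (use 2 in auto)
    qed
    then show ?thesis by simp
  qed
  have all: "act (word_class rels w) x = x" for w
  proof (induction w)
    case Nil
    have "word_class rels [] = \<one>" using one_pg G by simp
    then show ?case using one by simp
  next
    case (Cons a w)
    have a: "act (word_class rels [a]) x = x"
    proof -
      obtain b1 b2 where ab: "a = (b1, b2)" by fastforce
      show ?thesis
      proof (cases b2)
        case False
        then show ?thesis using fixes_cl ab c_def l_def by (cases b1) (auto simp: wc_def wl_def)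
      next
        case True
        have iw: "[a] = inv_word [(b1, False)]" using ab True by (simp add: inv_word_def inv_letter_def)
        have "act (word_class rels [(b1,False)]) x = x"
          using fixes_cl ab c_def l_def by (cases b1) (auto simp: wc_def wl_def)
        then have "act (inv (word_class rels [(b1,False)])) x = x"
          apply (intro fix_inv[of G act "word_class rels [(b1, False)]" x])
          using grp mult one cG by auto
        then show ?thesis using iw inv_pg G by simp
      qed
    qed
    have "word_class rels (a # w) = word_class rels [a] \<otimes> word_class rels w" using mG by simp
    then show ?case using mult cG a Cons by simp
  qed
  show ?thesis using all carrier_pg G by auto
qed

theorem lemma3p3:
  fixes s p q :: int
    and k :: "letter list set"
    and act :: "letter list set \<Rightarrow> 'p::order \<Rightarrow> 'p"
    and x :: 'p
  assumes "s \<ge> 3"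
    and "coprime p q"
    and "q > 0"
    and "p - (4 * s + 7) * q \<ge> 0"
    and "k \<in> carrier (GK s p q)"
    and "k [^]\<^bsub>GK s p q\<^esub> q = elt_M s p q"
    and "k [^]\<^bsub>GK s p q\<^esub> (- p) = elt_L s p q"
    and "right_order_action (GK s p q) act"
    and "(act k x = x \<and> comparable x (act (gen_l s p q) x))
         \<or> (act (gen_l s p q) x = x \<and> comparable x (act k x))"
  shows "\<forall>g\<in>carrier (GK s p q). act g x = x"
  by (rule main_aux[of "GK s p q" "relators s p q" k q p s act x])
     (use assms in \<open>simp_all add: GK_def elt_M_def elt_L_def gen_l_def M_word_def\<close>)


end
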